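(* Let $\varphi:\mathfrak{h}\to V^*$ be a real or complex factorization structure of dimension $m$ and $j\in\{1,\ldots,m\}$, and let $U=\{\ell\in\mathbb{P}(V_j):\dim(\varphi(\mathfrak{h})\cap\Sigma^0_{j,\ell})=1\}$. Then there is a nonempty Zariski-open subset $W\subset U$ on which the map $\ell\mapsto\varphi^{-1}(\varphi(\mathfrak{h})\cap\Sigma^0_{j,\ell})\in\mathbb{P}(\mathfrak{h})$ is a regular map, given in homogeneous coordinates on $\mathbb{P}(V_j)$ and $\mathbb{P}(\mathfrak{h})$ by homogeneous polynomials of a common degree at most $m$.
   Context: $V_1,\ldots,V_m$ are 2-dimensional vector spaces over $\mathbb{F}=\mathbb{R}$ or $\mathbb{C}$, $V^*=V_1^*\otimes\cdots\otimes V_m^*$; for $\ell\in\mathbb{P}(V_j)$, $\Sigma^0_{j,\ell}=V_1^*\otimes\cdots\otimes\ell^0\otimes\cdots\otimes V_m^*$ with $\ell^0$ the annihilator of $\ell$ in slot $j$. A factorization structure of dimension $m$ is an injective linear map $\varphi:\mathfrak{h}\to V^*$, $\dim\mathfrak{h}=m+1$, with $\dim(\varphi(\mathfrak{h})\cap\Sigma^0_{j,\ell})=1$ for every $j$ and all $\ell$ in a nonempty Zariski-open subset of $\mathbb{P}(V_j)$. *)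

theory Defs
  imports Complex_Main
begin

text \<open>The field F is any type of class real_normed_field (i.e. R or C).
  V_j = F^2 with standard basis e_False, e_True; V_j^* has the dual basis.
  V^* = V_1^* (x) ... (x) V_m^* is identified with functions on the index set
  idx m = {s :: nat => bool. s i only possibly True for i in {1..m}};
  s j = False/True selects the dual basis vector in slot j.
  h = F^(m+1) is identified with functions nat => F supported in {0..m};
  phi is given by the images phi k of the basis vectors e_k, k = 0..m.
  A point l of P(V_j) is represented by a nonzero vector (x,y) in F^2 spanning it.\<close>

definition idx :: "nat \<Rightarrow> (nat \<Rightarrow> bool) set" where
  "idx m = {s. \<forall>i. s i \<longrightarrow> i \<in> {1..m}}"

definition tensors :: "nat \<Rightarrow> ((nat \<Rightarrow> bool) \<Rightarrow> 'a::field) set" where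
  "tensors m = {T. \<forall>s. s \<notin> idx m \<longrightarrow> T s = 0}"

definition hspace :: "nat \<Rightarrow> (nat \<Rightarrow> 'a::field) set" where
  "hspace m = {c. \<forall>k. m < k \<longrightarrow> c k = 0}"

definition lin :: "nat \<Rightarrow> (nat \<Rightarrow> (nat \<Rightarrow> bool) \<Rightarrow> 'a::field) \<Rightarrow> (nat \<Rightarrow> 'a) \<Rightarrow> ((nat \<Rightarrow> bool) \<Rightarrow> 'a)" where
  "lin m phi c = (\<lambda>s. \<Sum>k\<le>m. c k * phi k s)"

text \<open>Sigma^0_{j,l} = V_1^* (x) ... (x) l^0 (x) ... (x) V_m^*, l spanned by v = (x,y):
  exactly the tensors whose contraction with v in slot j vanishes.\<close>
definition Sigma0 :: "nat \<Rightarrow> nat \<Rightarrow> 'a \<times> 'a \<Rightarrow> ((nat \<Rightarrow> bool) \<Rightarrow> 'a::field) set" where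
  "Sigma0 m j v = {T \<in> tensors m. \<forall>s\<in>idx m.
       fst v * T (s(j := False)) + snd v * T (s(j := True)) = 0}"

definition one_dim :: "('b \<Rightarrow> 'a::field) set \<Rightarrow> bool" where
  "one_dim S \<longleftrightarrow> (\<exists>T. T \<noteq> (\<lambda>_. 0) \<and> S = {(\<lambda>s. t * T s) | t. True})"

definition image_phi :: "nat \<Rightarrow> (nat \<Rightarrow> (nat \<Rightarrow> bool) \<Rightarrow> 'a::field) \<Rightarrow> ((nat \<Rightarrow> bool) \<Rightarrow> 'a) set" where
  "image_phi m phi = lin m phi ` hspace m"

definition hpoly :: "nat \<Rightarrow> (nat \<Rightarrow> 'a::field) \<Rightarrow> 'a \<times> 'a \<Rightarrow> 'a" where
  "hpoly d c v = (\<Sum>i\<le>d. c i * fst v ^ i * snd v ^ (d - i))"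

text \<open>Zariski-open subsets of P^1 (as sets of nonzero representatives): complements of
  common zero loci of families of homogeneous polynomials.\<close>
definition zariski_open_P1 :: "('a::field \<times> 'a) set \<Rightarrow> bool" where
  "zariski_open_P1 W \<longleftrightarrow> (\<exists>P :: (nat \<times> (nat \<Rightarrow> 'a)) set.
      W = {v. v \<noteq> (0,0) \<and> (\<exists>(d,c)\<in>P. hpoly d c v \<noteq> 0)})"

definition goodU :: "nat \<Rightarrow> (nat \<Rightarrow> (nat \<Rightarrow> bool) \<Rightarrow> 'a::field) \<Rightarrow> nat \<Rightarrow> ('a \<times> 'a) set" where
  "goodU m phi j = {v. v \<noteq> (0,0) \<and> one_dim (image_phi m phi \<inter> Sigma0 m j v)}"

definition factorization_structure :: "nat \<Rightarrow> (nat \<Rightarrow> (nat \<Rightarrow> bool) \<Rightarrow> 'a::field) \<Rightarrow> bool" where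
  "factorization_structure m phi \<longleftrightarrow>
     (\<forall>k\<le>m. phi k \<in> tensors m) \<and>
     inj_on (lin m phi) (hspace m) \<and>
     (\<forall>j\<in>{1..m}. \<exists>W. zariski_open_P1 W \<and> W \<noteq> {} \<and> W \<subseteq> goodU m phi j)"

end

theory Submission
  imports Defs "Jordan_Normal_Form.Determinant" "Jordan_Normal_Form.Gauss_Jordan_Elimination"
begin

definition ishp :: "nat \<Rightarrow> ('a::field \<times> 'a \<Rightarrow> 'a) \<Rightarrow> bool" where
  "ishp d f \<longleftrightarrow> (\<exists>c. \<forall>v. f v = hpoly d c v)"

lemma hp_mult_x: "hpoly d c v * fst v = hpoly (Suc d) (\<lambda>i. if i = 0 then 0 else c (i - 1)) v"
proof -
  have "hpoly (Suc d) (\<lambda>i. if i = 0 then 0 else c (i - 1)) v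
      = (\<Sum>i\<le>d. c i * fst v ^ Suc i * snd v ^ (d - i))"
    unfolding hpoly_def by (subst sum.atMost_Suc_shift) simp
  also have "\<dots> = hpoly d c v * fst v"
    unfolding hpoly_def sum_distrib_right by (rule sum.cong) (auto simp: algebra_simps)
  finally show ?thesis by simp
qed

lemma hp_mult_y: "hpoly d c v * snd v = hpoly (Suc d) (\<lambda>i. if i \<le> d then c i else 0) v"
  unfolding hpoly_def sum.atMost_Suc
  by (auto simp add: sum_distrib_right sum_distrib_left algebra_simps Suc_diff_le intro!: sum.cong)

lemma ishp_add': "ishp d f \<Longrightarrow> ishp d g \<Longrightarrow> ishp d (\<lambda>v. f v + g v)"
proof -
  assume "ishp d f" "ishp d g"
  then obtain a b where "\<forall>v. f v = hpoly d a v" "\<forall>v. g v = hpoly d b v" unfolding ishp_def by blast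
  then have "\<forall>v. f v + g v = hpoly d (\<lambda>i. a i + b i) v"
    by (simp add: hpoly_def sum.distrib[symmetric] algebra_simps)
  then show ?thesis unfolding ishp_def by blast
qed

lemma ishp_smult: "ishp d f \<Longrightarrow> ishp d (\<lambda>v. k * f v)"
proof -
  assume "ishp d f"
  then obtain a where "\<forall>v. f v = hpoly d a v" unfolding ishp_def by blast
  then have "\<forall>v. k * f v = hpoly d (\<lambda>i. k * a i) v"
    by (simp add: hpoly_def sum_distrib_left algebra_simps)
  then show ?thesis unfolding ishp_def by blast
qed

lemma ishp_zero: "ishp d (\<lambda>v. 0)"
  unfolding ishp_def by (rule exI[of _ "\<lambda>_. 0"]) (simp add: hpoly_def)

lemma ishp_sum: "finite S \<Longrightarrow> (\<And>s. s \<in> S \<Longrightarrow> ishp d (f s)) \<Longrightarrow> ishp d (\<lambda>v. \<Sum>s\<in>S. f s v)"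
proof (induction S rule: finite_induct)
  case empty then show ?case by (simp add: ishp_zero)
next
  case (insert x F)
  then show ?case by (simp add: ishp_add')
qed

lemma ishp_const: "ishp 0 (\<lambda>v. k)"
  unfolding ishp_def by (rule exI[of _ "\<lambda>_. k"]) (simp add: hpoly_def)

lemma ishp_mx: "ishp d f \<Longrightarrow> ishp (Suc d) (\<lambda>v. f v * fst v)"
  unfolding ishp_def using hp_mult_x by metis

lemma ishp_my: "ishp d f \<Longrightarrow> ishp (Suc d) (\<lambda>v. f v * snd v)"
  unfolding ishp_def using hp_mult_y by metis

lemma ishp_mlin: "ishp d f \<Longrightarrow> ishp (Suc d) (\<lambda>v. f v * (fst v * a + snd v * b))"
proof -
  assume f: "ishp d f"
  have "ishp (Suc d) (\<lambda>v. a * (f v * fst v) + b * (f v * snd v))"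
    by (intro ishp_add' ishp_smult ishp_mx ishp_my f)
  then show ?thesis by (simp add: algebra_simps)
qed

lemma ishp_mxy: "ishp d f \<Longrightarrow> ishp (d + i + k) (\<lambda>v. f v * fst v ^ i * snd v ^ k)"
proof (induction k)
  case 0
  then show ?case
  proof (induction i)
    case 0 then show ?case by simp
  next
    case (Suc i)
    then have "ishp (Suc (d + i)) (\<lambda>v. (f v * fst v ^ i) * fst v)" using ishp_mx by fastforce
    then show ?case by (simp add: algebra_simps)
  qed
next
  case (Suc k)
  then have "ishp (Suc (d + i + k)) (\<lambda>v. (f v * fst v ^ i * snd v ^ k) * snd v)" using ishp_my by fastforce
  then show ?case by (simp add: algebra_simps)
qed

lemma ishp_mult: "ishp d f \<Longrightarrow> ishp e g \<Longrightarrow> ishp (d + e) (\<lambda>v. f v * g v)"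
proof -
  assume f: "ishp d f" and g: "ishp e g"
  then obtain b where b: "\<forall>v. g v = hpoly e b v" unfolding ishp_def by blast
  have "ishp (d + e) (\<lambda>v. \<Sum>i\<le>e. b i * (f v * fst v ^ i * snd v ^ (e - i)))"
  proof (rule ishp_sum)
    fix i assume "i \<in> {..e}"
    then have "d + e = d + i + (e - i)" by simp
    then show "ishp (d + e) (\<lambda>v. b i * (f v * fst v ^ i * snd v ^ (e - i)))"
      using ishp_smult[OF ishp_mxy[OF f, of i "e - i"]] by simp
  qed simp
  moreover have "\<And>v. f v * g v = (\<Sum>i\<le>e. b i * (f v * fst v ^ i * snd v ^ (e - i)))"
  proof -
    fix v
    have "g v = hpoly e b v" using b by blast
    then show "f v * g v = (\<Sum>i\<le>e. b i * (f v * fst v ^ i * snd v ^ (e - i)))"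
      by (simp add: hpoly_def sum_distrib_left algebra_simps)
  qed
  ultimately show ?thesis by simp
qed

lemma ishp_prod_lin: "(\<And>i. i < n \<Longrightarrow> \<exists>a b. \<forall>v. f i v = fst v * a + snd v * b) \<Longrightarrow>
  ishp n (\<lambda>v. \<Prod>i=0..<n. f i v)"
proof (induction n)
  case 0 then show ?case by (simp add: ishp_const)
next
  case (Suc n)
  then obtain a b where ab: "\<And>v. f n v = fst v * a + snd v * b" by blast
  have "ishp (Suc n) (\<lambda>v. (\<Prod>i=0..<n. f i v) * (fst v * a + snd v * b))"
    using Suc by (intro ishp_mlin) auto
  then show ?case by (simp add: ab)
qed


lemma mv_index: "A \<in> carrier_mat nr nc \<Longrightarrow> x \<in> carrier_vec nc \<Longrightarrow> i < nr \<Longrightarrow>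
   (A *\<^sub>v x) $ i = (\<Sum>k\<in>{0..<nc}. A $$ (i,k) * x $ k)"
  by (auto simp: scalar_prod_def intro!: sum.cong)

lemma mm_index: "A \<in> carrier_mat nr n \<Longrightarrow> B \<in> carrier_mat n nc \<Longrightarrow> i < nr \<Longrightarrow> j < nc \<Longrightarrow>
   (A * B) $$ (i,j) = (\<Sum>k\<in>{0..<n}. A $$ (i,k) * B $$ (k,j))"
  by (auto simp: scalar_prod_def intro!: sum.cong)

lemma det_ishp:
  assumes B: "\<And>v. B v \<in> carrier_mat d d"
    and lin: "\<And>i l. i < d \<Longrightarrow> l < d \<Longrightarrow> \<exists>a b. \<forall>v. B v $$ (i,l) = fst v * a + snd v * b"
  shows "ishp d (\<lambda>v. det (B v))"
proof -
  have "ishp d (\<lambda>v. \<Sum>p \<in> {p. p permutes {0 ..< d}}. signof p * (\<Prod>i = 0 ..< d. B v $$ (i, p i)))"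
  proof (rule ishp_sum)
    show "finite {p. p permutes {0 ..< d}}" by (simp add: finite_permutations)
    fix p assume p: "p \<in> {p. p permutes {0 ..< d}}"
    show "ishp d (\<lambda>v. signof p * (\<Prod>i = 0 ..< d. B v $$ (i, p i)))"
    proof (rule ishp_smult, rule ishp_prod_lin)
      fix i assume "i < d"
      moreover then have "p i < d" using p permutes_in_image by fastforce
      ultimately show "\<exists>a b. \<forall>v. B v $$ (i, p i) = fst v * a + snd v * b" using lin by blast
    qed
  qed
  then show ?thesis using det_def'[OF B] by simp
qed

definition Mv :: "(nat \<Rightarrow> nat \<Rightarrow> 'a::field) \<Rightarrow> (nat \<Rightarrow> nat \<Rightarrow> 'a) \<Rightarrow> 'a \<times> 'a \<Rightarrow> nat \<Rightarrow> nat \<Rightarrow> 'a" where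
  "Mv \<alpha> \<beta> v r k = fst v * \<alpha> r k + snd v * \<beta> r k"

definition kerM :: "nat \<Rightarrow> nat \<Rightarrow> (nat \<Rightarrow> nat \<Rightarrow> 'a::field) \<Rightarrow> (nat \<Rightarrow> nat \<Rightarrow> 'a) \<Rightarrow> 'a \<times> 'a \<Rightarrow> (nat \<Rightarrow> 'a) set" where
  "kerM N m \<alpha> \<beta> v = {c. (\<forall>k. m < k \<longrightarrow> c k = 0) \<and> (\<forall>r<N. (\<Sum>k\<le>m. Mv \<alpha> \<beta> v r k * c k) = 0)}"

lemma sum_delta_q: "q < (n::nat) \<Longrightarrow> (\<Sum>k\<in>{0..<n}. (if k = q then 1 else 0) * f k) = (f q :: 'a::field)"
proof -
  assume q: "q < n"
  have "(\<Sum>k\<in>{0..<n}. (if k = q then 1 else 0) * f k) = (\<Sum>k\<in>{0..<n}. if k = q then f k else 0)"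
    by (rule sum.cong) auto
  also have "\<dots> = f q" using q by (subst sum.delta) auto
  finally show ?thesis .
qed


context
  fixes N m :: nat and \<alpha> \<beta> :: "nat \<Rightarrow> nat \<Rightarrow> 'a::field" and R :: "nat \<Rightarrow> nat \<Rightarrow> 'a"
begin

definition "Pm v a k = (\<Sum>r\<in>{0..<N}. R a r * Mv \<alpha> \<beta> v r k)"

definition "Qm u v = mat (Suc m) (Suc m) (\<lambda>(i,k). if i = 0 then u k else Pm v (i - 1) k)"

definition "cf v k = cofactor (Qm (\<lambda>_. 0) v) 0 k"

lemma Qm_carrier: "Qm u v \<in> carrier_mat (Suc m) (Suc m)"
  unfolding Qm_def by simp

lemma cof_indep: "cofactor (Qm u v) 0 k = cf v k"
proof -
  have "mat_delete (Qm u v) 0 k = mat_delete (Qm (\<lambda>_. 0) v) 0 k"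
    by (rule eq_matI) (auto simp: mat_delete_def Qm_def)
  then show ?thesis unfolding cf_def cofactor_def by simp
qed

lemma L1: "det (Qm u v) = (\<Sum>k\<in>{0..<Suc m}. u k * cf v k)"
proof -
  have "det (Qm u v) = (\<Sum>j<Suc m. Qm u v $$ (0,j) * cofactor (Qm u v) 0 j)"
    by (rule laplace_expansion_row[OF Qm_carrier]) simp
  also have "\<dots> = (\<Sum>k\<in>{0..<Suc m}. u k * cf v k)"
  proof (rule sum.cong)
    fix x assume "x \<in> {0..<Suc m}"
    then show "Qm u v $$ (0,x) * cofactor (Qm u v) 0 x = u x * cf v x"
      by (simp add: cof_indep) (simp add: Qm_def)
  qed (simp add: atLeast0LessThan)
  finally show ?thesis .
qed

lemma L2: "a < m \<Longrightarrow> (\<Sum>k\<in>{0..<Suc m}. Pm v a k * cf v k) = 0"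
proof -
  assume a: "a < m"
  have "det (Qm (Pm v a) v) = 0"
  proof (rule det_identical_rows[OF Qm_carrier, of 0 "Suc a"])
    show "row (Qm (Pm v a) v) 0 = row (Qm (Pm v a) v) (Suc a)"
      by (rule eq_vecI) (use a in \<open>auto simp: Qm_def\<close>)
  qed (use a in auto)
  then show ?thesis using L1 by simp
qed

lemma L3:
  assumes k0: "k0 < Suc m" "cf v k0 \<noteq> 0"
    and x: "\<And>a. a < m \<Longrightarrow> (\<Sum>k\<in>{0..<Suc m}. Pm v a k * x k) = 0"
  shows "\<And>k. k < Suc m \<Longrightarrow> x k = (x k0 / cf v k0) * cf v k"
proof -
  define e where "e = (\<lambda>k. if k = k0 then 1 else (0::'a))"
  define y where "y = vec (Suc m) (\<lambda>k. cf v k0 * x k - x k0 * cf v k)"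
  have y: "y \<in> carrier_vec (Suc m)" unfolding y_def by simp
  have "det (Qm e v) = cf v k0" unfolding L1 e_def by (rule sum_delta_q[OF k0(1)])
  then have "det (Qm e v) \<noteq> 0" using k0 by simp
  then have nz: "\<not> (y \<noteq> 0\<^sub>v (Suc m) \<and> Qm e v *\<^sub>v y = 0\<^sub>v (Suc m))"
    using det_0_iff_vec_prod_zero_field[OF Qm_carrier] y by blast
  have "Qm e v *\<^sub>v y = 0\<^sub>v (Suc m)"
  proof (rule eq_vecI)
    fix i assume "i < dim_vec (0\<^sub>v (Suc m) :: 'a vec)"
    then have i: "i < Suc m" by simp
    have "(Qm e v *\<^sub>v y) $ i = (\<Sum>k\<in>{0..<Suc m}. Qm e v $$ (i,k) * y $ k)"
      by (rule mv_index[OF Qm_carrier y i])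
    also have "\<dots> = 0"
    proof (cases i)
      case 0
      have "(\<Sum>k\<in>{0..<Suc m}. Qm e v $$ (i,k) * y $ k) = (\<Sum>k\<in>{0..<Suc m}. e k * y $ k)"
        by (rule sum.cong) (auto simp: Qm_def 0)
      also have "\<dots> = y $ k0" unfolding e_def by (rule sum_delta_q[OF k0(1)])
      also have "\<dots> = 0" unfolding y_def using k0 by simp
      finally show ?thesis .
    next
      case (Suc a)
      then have a: "a < m" using i by simp
      have "(\<Sum>k\<in>{0..<Suc m}. Qm e v $$ (i,k) * y $ k)
          = (\<Sum>k\<in>{0..<Suc m}. cf v k0 * (Pm v a k * x k) - x k0 * (Pm v a k * cf v k))"
        by (rule sum.cong) (use a in \<open>auto simp: Qm_def Suc y_def algebra_simps\<close>)
      also have "\<dots> = cf v k0 * (\<Sum>k\<in>{0..<Suc m}. Pm v a k * x k) - x k0 * (\<Sum>k\<in>{0..<Suc m}. Pm v a k * cf v k)"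
        by (simp only: sum_subtractf sum_distrib_left)
      also have "\<dots> = 0" using x[OF a] L2[OF a] by simp
      finally show ?thesis .
    qed
    finally show "(Qm e v *\<^sub>v y) $ i = 0\<^sub>v (Suc m) $ i" using i by simp
  qed (simp add: Qm_def)
  then have "y = 0\<^sub>v (Suc m)" using nz by blast
  fix k assume k: "k < Suc m"
  have "y $ k = 0" using \<open>y = 0\<^sub>v (Suc m)\<close> k by simp
  then have "cf v k0 * x k = x k0 * cf v k" unfolding y_def using k by simp
  then show "x k = (x k0 / cf v k0) * cf v k" using k0(2)
    by (simp add: field_simps)
qed

lemma L5: "k < Suc m \<Longrightarrow> ishp m (\<lambda>v. cf v k)"
proof -
  assume k: "k < Suc m"
  have "ishp m (\<lambda>v. (-1)^(0+k) * det (mat_delete (Qm (\<lambda>_. 0) v) 0 k))"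
  proof (rule ishp_smult, rule det_ishp)
    fix v show "mat_delete (Qm (\<lambda>_. 0) v) 0 k \<in> carrier_mat m m"
      using mat_delete_carrier[OF Qm_carrier] by simp
  next
    fix i l assume il: "i < m" "l < m"
    define l' where "l' = (if l < k then l else Suc l)"
    have "\<forall>v. mat_delete (Qm (\<lambda>_. 0) v) 0 k $$ (i,l)
       = fst v * (\<Sum>r\<in>{0..<N}. R i r * \<alpha> r l') + snd v * (\<Sum>r\<in>{0..<N}. R i r * \<beta> r l')"
      using il by (auto simp: mat_delete_def Qm_def l'_def Pm_def Mv_def sum_distrib_left sum.distrib algebra_simps)
    then show "\<exists>a b. \<forall>v. mat_delete (Qm (\<lambda>_. 0) v) 0 k $$ (i,l) = fst v * a + snd v * b" by blast
  qed
  then show ?thesis unfolding cf_def cofactor_def by simp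
qed

lemma L4: "c \<in> kerM N m \<alpha> \<beta> v \<Longrightarrow> a < m \<Longrightarrow> (\<Sum>k\<in>{0..<Suc m}. Pm v a k * c k) = 0"
proof -
  assume c: "c \<in> kerM N m \<alpha> \<beta> v"
  have "(\<Sum>k\<in>{0..<Suc m}. Pm v a k * c k) = (\<Sum>r\<in>{0..<N}. R a r * (\<Sum>k\<le>m. Mv \<alpha> \<beta> v r k * c k))"
    unfolding Pm_def sum_distrib_right sum_distrib_left atLeast0LessThan lessThan_Suc_atMost
    by (subst sum.swap) (simp add: algebra_simps)
  also have "\<dots> = 0" using c unfolding kerM_def by simp
  finally show ?thesis .
qed

end


lemma main_la:
  fixes \<alpha> \<beta> :: "nat \<Rightarrow> nat \<Rightarrow> 'a::field"
  assumes v0: "kerM N m \<alpha> \<beta> v0 = {(\<lambda>k. t * c0 k) | t. True}" and c0: "c0 \<noteq> (\<lambda>_. 0)"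
  shows "\<exists>F. (\<lambda>k. if k \<le> m then hpoly m (F k) v0 else 0) \<noteq> (\<lambda>_. 0) \<and>
    (\<forall>v. (\<exists>c. c \<noteq> (\<lambda>_. 0) \<and> kerM N m \<alpha> \<beta> v = {(\<lambda>k. t * c k) | t. True}) \<and>
         (\<lambda>k. if k \<le> m then hpoly m (F k) v else 0) \<noteq> (\<lambda>_. 0) \<longrightarrow>
       kerM N m \<alpha> \<beta> v = {(\<lambda>k. t * (if k \<le> m then hpoly m (F k) v else 0)) | t. True})"
proof -
  define A0 where "A0 = mat N (Suc m) (\<lambda>(r,k). Mv \<alpha> \<beta> v0 r k)"
  have A0: "A0 \<in> carrier_mat N (Suc m)" unfolding A0_def by simp
  define tf where "tf x = (\<lambda>k. if k < Suc m then x $ k else 0)" for x :: "'a vec"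
  have "c0 = (\<lambda>k. 1 * c0 k)" by simp
  then have c0ker: "c0 \<in> kerM N m \<alpha> \<beta> v0" using v0 by blast
  then have c0m: "\<And>k. m < k \<Longrightarrow> c0 k = 0" unfolding kerM_def by blast
  have kerA: "(A0 *\<^sub>v x = 0\<^sub>v N) = (tf x \<in> kerM N m \<alpha> \<beta> v0)" if x: "x \<in> carrier_vec (Suc m)" for x
  proof -
    have s: "(\<Sum>k\<le>m. Mv \<alpha> \<beta> v0 r k * tf x k) = (A0 *\<^sub>v x) $ r" if r: "r < N" for r
    proof -
      have "(A0 *\<^sub>v x) $ r = (\<Sum>k\<in>{0..<Suc m}. A0 $$ (r,k) * x $ k)" by (rule mv_index[OF A0 x r])
      also have "\<dots> = (\<Sum>k\<le>m. Mv \<alpha> \<beta> v0 r k * tf x k)"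
        unfolding atLeast0LessThan lessThan_Suc_atMost[symmetric]
        by (rule sum.cong) (use r in \<open>auto simp: A0_def tf_def\<close>)
      finally show ?thesis by simp
    qed
    have "(A0 *\<^sub>v x = 0\<^sub>v N) = (\<forall>r<N. (A0 *\<^sub>v x) $ r = 0)"
      using A0 by (auto simp: vec_eq_iff)
    also have "\<dots> = (tf x \<in> kerM N m \<alpha> \<beta> v0)"
      unfolding kerM_def using s by (auto simp: tf_def)
    finally show ?thesis .
  qed
  have mult: "\<exists>t. \<forall>k<Suc m. x $ k = t * c0 k" if x: "x \<in> carrier_vec (Suc m)" "A0 *\<^sub>v x = 0\<^sub>v N" for x
  proof -
    have "tf x \<in> kerM N m \<alpha> \<beta> v0" using kerA x by blast
    then obtain t where "tf x = (\<lambda>k. t * c0 k)" using v0 by blast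
    then have "\<forall>k<Suc m. x $ k = t * c0 k" unfolding tf_def by (metis (mono_tags, lifting))
    then show ?thesis by blast
  qed
  obtain C where Cdef: "gauss_jordan_single A0 = C" by simp
  note gj = gauss_jordan_single[OF A0 Cdef]
  have Cc: "C \<in> carrier_mat N (Suc m)" and ref: "row_echelon_form C" using gj by auto
  have kerC: "x \<in> carrier_vec (Suc m) \<Longrightarrow> (A0 *\<^sub>v x = 0\<^sub>v N) = (C *\<^sub>v x = 0\<^sub>v N)" for x using gj(1) by blast
  obtain P where P: "C = P * A0" "P \<in> carrier_mat N N" using gj(4) by blast
  obtain p where piv: "pivot_fun C p (Suc m)" using ref Cc unfolding row_echelon_form_def by auto
  have pp: "set (pivot_positions C) = {(i, p i) | i. i < N \<and> p i \<noteq> Suc m}"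
    by (rule pivot_positions(1)[OF Cc piv])
  have dC: "dim_row C = N" using Cc by simp
  note pd = pivot_funD[OF dC piv]
  define NP where "NP q \<longleftrightarrow> q < Suc m \<and> q \<notin> snd ` set (pivot_positions C)" for q
  define npb where "npb q = non_pivot_base C (pivot_positions C) q" for q
  have npb: "npb q \<in> carrier_vec (Suc m)" "npb q $ q = 1" "C *\<^sub>v npb q = 0\<^sub>v N"
    "\<And>q'. NP q' \<Longrightarrow> q \<noteq> q' \<Longrightarrow> npb q $ q' = 0" if "NP q" for q
    using non_pivot_base[OF ref Cc] that unfolding NP_def npb_def by auto
  have npbmult: "\<exists>t. \<forall>k<Suc m. npb q $ k = t * c0 k" if "NP q" for q
    using mult npb[OF that] kerC by blast
  have "\<exists>q. NP q"
  proof (rule ccontr)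
    assume "\<not> (\<exists>q. NP q)"
    then have allp: "\<exists>i. i < N \<and> p i \<noteq> Suc m \<and> p i = k" if "k < Suc m" for k
      using that unfolding NP_def pp by force
    define x where "x = vec (Suc m) c0"
    have x: "x \<in> carrier_vec (Suc m)" unfolding x_def by simp
    have "tf x = c0" unfolding tf_def x_def using c0m by (auto simp: fun_eq_iff)
    then have "A0 *\<^sub>v x = 0\<^sub>v N" using kerA[OF x] c0ker by simp
    then have Cx: "C *\<^sub>v x = 0\<^sub>v N" using kerC[OF x] by simp
    have "c0 k = 0" if k: "k < Suc m" for k
    proof -
      obtain i where i: "i < N" "p i \<noteq> Suc m" "p i = k" using allp[OF k] by blast
      have "(C *\<^sub>v x) $ i = (\<Sum>l\<in>{0..<Suc m}. C $$ (i,l) * x $ l)" by (rule mv_index[OF Cc x i(1)])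
      also have "\<dots> = (\<Sum>l\<in>{0..<Suc m}. if l = k then c0 l else 0)"
      proof (rule sum.cong)
        fix l assume l: "l \<in> {0..<Suc m}"
        show "C $$ (i,l) * x $ l = (if l = k then c0 l else 0)"
        proof (cases "l = k")
          case True
          then show ?thesis using pd(4)[OF i(1)] i k l by (simp add: x_def)
        next
          case False
          obtain i' where i': "i' < N" "p i' \<noteq> Suc m" "p i' = l" using allp l by auto
          have "i' \<noteq> i" using i i' False by auto
          have "p i' < Suc m" using pd(1)[OF i'(1)] i'(2) by simp
          then have "C $$ (i, l) = 0" using pd(5)[OF i'(1) _ i(1)] \<open>i' \<noteq> i\<close> i' by auto
          then show ?thesis using False by simp
        qed
      qed simp
      also have "\<dots> = c0 k" using k by (subst sum.delta) auto
      finally show ?thesis using Cx i(1) by simp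
    qed
    then have "c0 = (\<lambda>_. 0)" using c0m by (auto simp: fun_eq_iff) (metis not_less_eq)
    then show False using c0 by simp
  qed
  then obtain q where q: "NP q" by blast
  then have qm: "q < Suc m" unfolding NP_def by simp
  obtain tq where tq: "\<forall>k<Suc m. npb q $ k = tq * c0 k" using npbmult[OF q] by blast
  have "tq * c0 q = 1" using tq qm npb(2)[OF q] by simp
  then have c0q: "c0 q \<noteq> 0" and tq0: "tq \<noteq> 0" by auto
  have uniq: "q' = q" if q': "NP q'" for q'
  proof (rule ccontr)
    assume ne: "q' \<noteq> q"
    have q'm: "q' < Suc m" using q' unfolding NP_def by simp
    have "tq * c0 q' = 0" using tq q'm npb(4)[OF q q'] ne by force
    then have "c0 q' = 0" using tq0 by simp
    obtain t' where "\<forall>k<Suc m. npb q' $ k = t' * c0 k" using npbmult[OF q'] by blast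
    then have "t' * c0 q' = 1" using q'm npb(2)[OF q'] by simp
    then show False using \<open>c0 q' = 0\<close> by simp
  qed
  define PR where "PR = {i. i < N \<and> p i \<noteq> Suc m}"
  have prlt: "p i < Suc m" "p i \<noteq> q" if "i \<in> PR" for i
  proof -
    show "p i < Suc m" using that pd(1) unfolding PR_def by fastforce
    have "(i, p i) \<in> set (pivot_positions C)" using that unfolding pp PR_def by blast
    then show "p i \<noteq> q" using q unfolding NP_def by force
  qed
  have inj: "inj_on p PR"
  proof (rule inj_onI)
    fix i i' assume ii: "i \<in> PR" "i' \<in> PR" "p i = p i'"
    show "i = i'"
    proof (rule ccontr)
      assume "i \<noteq> i'"
      then have "C $$ (i', p i) = 0" using pd(5)[of i i'] ii prlt unfolding PR_def by auto
      moreover have "C $$ (i', p i') = 1" using pd(4)[of i'] ii prlt unfolding PR_def by auto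
      ultimately show False using ii by simp
    qed
  qed
  have finPR: "finite PR" unfolding PR_def by simp
  have cardPR: "card PR \<le> m"
  proof -
    have "card PR = card (p ` PR)" using card_image[OF inj] by simp
    also have "\<dots> \<le> card ({0..<Suc m} - {q})"
      by (rule card_mono) (use prlt in auto)
    also have "\<dots> = m" using qm by simp
    finally show ?thesis .
  qed
  have down: "p i' = Suc m" if "i < N" "p i = Suc m" "i \<le> i'" "i' < N" for i i'
    using that
  proof (induction i')
    case 0 then show ?case by simp
  next
    case (Suc i')
    show ?case
    proof (cases "i = Suc i'")
      case True then show ?thesis using Suc by simp
    next
      case False
      then have "p i' = Suc m" using Suc by simp
      then show ?thesis using pd(3)[of i'] pd(1)[of "Suc i'"] Suc by fastforce
    qed
  qed
  have PRlt: "i < m" if i: "i \<in> PR" for i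
  proof (rule ccontr)
    assume "\<not> i < m"
    have "{0..i} \<subseteq> PR"
    proof
      fix i' assume "i' \<in> {0..i}"
      then show "i' \<in> PR" using down[of i' i] i unfolding PR_def by auto
    qed
    then have "card {0..i} \<le> card PR" using finPR card_mono by blast
    then show False using cardPR \<open>\<not> i < m\<close> by simp
  qed
  have zerorow: "C $$ (i,l) = 0" if "i < N" "i \<notin> PR" "l < Suc m" for i l
    using pd(2)[of i l] that unfolding PR_def by auto
  define R where "R a r = (if a < N then P $$ (a,r) else 0)" for a r
  have CPm: "C $$ (i,k) = Pm N \<alpha> \<beta> R v0 i k" if "i < N" "k < Suc m" for i k
  proof -
    have "C $$ (i,k) = (\<Sum>r\<in>{0..<N}. P $$ (i,r) * A0 $$ (r,k))"
      unfolding P(1) by (rule mm_index[OF P(2) A0 that])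
    also have "\<dots> = Pm N \<alpha> \<beta> R v0 i k"
      unfolding Pm_def by (rule sum.cong) (use that in \<open>auto simp: R_def A0_def\<close>)
    finally show ?thesis .
  qed
  have cfq: "cf N m \<alpha> \<beta> R v0 q \<noteq> 0"
  proof
    assume cf0: "cf N m \<alpha> \<beta> R v0 q = 0"
    define e where "e = (\<lambda>k. if k = q then 1 else (0::'a))"
    have "det (Qm N m \<alpha> \<beta> R e v0) = cf N m \<alpha> \<beta> R v0 q" unfolding L1 e_def by (rule sum_delta_q[OF qm])
    then have "det (Qm N m \<alpha> \<beta> R e v0) = 0" using cf0 by simp
    then obtain y where y: "y \<in> carrier_vec (Suc m)" "y \<noteq> 0\<^sub>v (Suc m)" "Qm N m \<alpha> \<beta> R e v0 *\<^sub>v y = 0\<^sub>v (Suc m)"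
      using det_0_iff_vec_prod_zero_field[OF Qm_carrier[of N m \<alpha> \<beta> R e v0]] by blast
    have yq: "y $ q = 0"
    proof -
      have "(Qm N m \<alpha> \<beta> R e v0 *\<^sub>v y) $ 0 = (\<Sum>k\<in>{0..<Suc m}. Qm N m \<alpha> \<beta> R e v0 $$ (0,k) * y $ k)"
        by (rule mv_index[OF Qm_carrier y(1)]) simp
      also have "\<dots> = (\<Sum>k\<in>{0..<Suc m}. e k * y $ k)" by (rule sum.cong) (auto simp: Qm_def)
      also have "\<dots> = y $ q" unfolding e_def by (rule sum_delta_q[OF qm])
      finally show ?thesis using y(3) by simp
    qed
    have ya: "(\<Sum>k\<in>{0..<Suc m}. Pm N \<alpha> \<beta> R v0 a k * y $ k) = 0" if a: "a < m" for a
    proof -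
      have "(Qm N m \<alpha> \<beta> R e v0 *\<^sub>v y) $ Suc a = (\<Sum>k\<in>{0..<Suc m}. Qm N m \<alpha> \<beta> R e v0 $$ (Suc a,k) * y $ k)"
        by (rule mv_index[OF Qm_carrier y(1)]) (use a in simp)
      also have "\<dots> = (\<Sum>k\<in>{0..<Suc m}. Pm N \<alpha> \<beta> R v0 a k * y $ k)"
        by (rule sum.cong) (use a in \<open>auto simp: Qm_def\<close>)
      finally show ?thesis using y(3) a by simp
    qed
    have "C *\<^sub>v y = 0\<^sub>v N"
    proof (rule eq_vecI)
      fix i assume "i < dim_vec (0\<^sub>v N :: 'a vec)"
      then have i: "i < N" by simp
      have "(C *\<^sub>v y) $ i = (\<Sum>k\<in>{0..<Suc m}. C $$ (i,k) * y $ k)" by (rule mv_index[OF Cc y(1) i])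
      also have "\<dots> = 0"
      proof (cases "i \<in> PR")
        case True
        then have "i < m" using PRlt by simp
        have "(\<Sum>k\<in>{0..<Suc m}. C $$ (i,k) * y $ k) = (\<Sum>k\<in>{0..<Suc m}. Pm N \<alpha> \<beta> R v0 i k * y $ k)"
          by (rule sum.cong) (use i CPm in auto)
        then show ?thesis using ya[OF \<open>i < m\<close>] by simp
      next
        case False
        then show ?thesis using zerorow[OF i False] by simp
      qed
      finally show "(C *\<^sub>v y) $ i = 0\<^sub>v N $ i" using i by simp
    qed (use Cc in simp)
    then obtain t where t: "\<forall>k<Suc m. y $ k = t * c0 k" using mult[OF y(1)] kerC[OF y(1)] by blast
    then have "t = 0" using yq qm c0q by auto
    then have "y = 0\<^sub>v (Suc m)" using t y(1) by (auto simp: vec_eq_iff)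
    then show False using y(2) by simp
  qed
  have "\<forall>k. \<exists>c. k < Suc m \<longrightarrow> (\<forall>v. cf N m \<alpha> \<beta> R v k = hpoly m c v)"
    using L5 unfolding ishp_def by blast
  then obtain F where F: "\<And>k v. k < Suc m \<Longrightarrow> cf N m \<alpha> \<beta> R v k = hpoly m (F k) v" by metis
  have G: "(\<lambda>k. if k \<le> m then hpoly m (F k) v else 0) = (\<lambda>k. if k \<le> m then cf N m \<alpha> \<beta> R v k else 0)" for v
    by (auto simp: F fun_eq_iff)
  show ?thesis
  proof (rule exI[of _ F], intro conjI allI impI)
    show "(\<lambda>k. if k \<le> m then hpoly m (F k) v0 else 0) \<noteq> (\<lambda>_. 0)"
      unfolding G using cfq qm by (auto simp: fun_eq_iff)
  next
    fix v
    assume asm: "(\<exists>c. c \<noteq> (\<lambda>_. 0) \<and> kerM N m \<alpha> \<beta> v = {(\<lambda>k. t * c k) | t. True}) \<and>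
         (\<lambda>k. if k \<le> m then hpoly m (F k) v else 0) \<noteq> (\<lambda>_. 0)"
    then obtain c where c: "c \<noteq> (\<lambda>_. 0)" "kerM N m \<alpha> \<beta> v = {(\<lambda>k. t * c k) | t. True}" by blast
    define Gv where "Gv = (\<lambda>k. if k \<le> m then cf N m \<alpha> \<beta> R v k else 0)"
    have "Gv \<noteq> (\<lambda>_. 0)" using asm unfolding G Gv_def by simp
    then obtain k0 where k0: "k0 \<le> m" "cf N m \<alpha> \<beta> R v k0 \<noteq> 0" unfolding Gv_def by (auto simp: fun_eq_iff split: if_splits)
    have "c = (\<lambda>k. 1 * c k)" by simp
    then have cker: "c \<in> kerM N m \<alpha> \<beta> v" using c by blast
    define s where "s = c k0 / cf N m \<alpha> \<beta> R v k0"
    have ck: "c k = s * cf N m \<alpha> \<beta> R v k" if "k < Suc m" for k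
      unfolding s_def by (rule L3[of k0]) (use k0 that L4[OF cker] in auto)
    have cG: "c = (\<lambda>k. s * Gv k)"
    proof
      fix k show "c k = s * Gv k"
      proof (cases "k \<le> m")
        case True then show ?thesis using ck[of k] unfolding Gv_def by simp
      next
        case False then show ?thesis using cker unfolding kerM_def Gv_def by simp
      qed
    qed
    have s0: "s \<noteq> 0" using c(1) cG by auto
    have "kerM N m \<alpha> \<beta> v = {(\<lambda>k. t * Gv k) | t. True}"
    proof -
      have "{(\<lambda>k. t * c k) | t. True} = {(\<lambda>k. t * Gv k) | t. True}"
      proof -
        have 1: "\<And>t. (\<lambda>k. t * c k) = (\<lambda>k. (t * s) * Gv k)" using cG by (simp add: mult.assoc)
        have 2: "\<And>t. (\<lambda>k. t * Gv k) = (\<lambda>k. (t / s) * c k)" using cG s0 by (simp add: fun_eq_iff)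
        show ?thesis
        proof
          show "{(\<lambda>k. t * c k) | t. True} \<subseteq> {(\<lambda>k. t * Gv k) | t. True}" using 1 by blast
          show "{(\<lambda>k. t * Gv k) | t. True} \<subseteq> {(\<lambda>k. t * c k) | t. True}" using 2 by blast
        qed
      qed
      then show ?thesis using c(2) by simp
    qed
    moreover have "\<And>k. (if k \<le> m then hpoly m (F k) v else 0) = Gv k" unfolding Gv_def by (auto simp: F)
    ultimately show "kerM N m \<alpha> \<beta> v = {(\<lambda>k. t * (if k \<le> m then hpoly m (F k) v else 0)) | t. True}"
      by simp
  qed
qed


lemma finite_idx: "finite (idx m)"
proof -
  have "idx m \<subseteq> (\<lambda>S i. i \<in> S) ` Pow {1..m}"
  proof
    fix s assume s: "s \<in> idx m"
    have "s = (\<lambda>i. i \<in> {i. s i})" by simp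
    moreover have "{i. s i} \<in> Pow {1..m}" using s unfolding idx_def by auto
    ultimately show "s \<in> (\<lambda>S i. i \<in> S) ` Pow {1..m}" by blast
  qed
  then show ?thesis by (rule finite_subset) simp
qed

lemma lin_scale: "lin m phi (\<lambda>k. t * c k) = (\<lambda>s. t * lin m phi c s)"
  unfolding lin_def by (simp add: sum_distrib_left algebra_simps)

theorem proposition2p1:
  fixes m j :: nat and phi :: "nat \<Rightarrow> (nat \<Rightarrow> bool) \<Rightarrow> 'a::real_normed_field"
  assumes "factorization_structure m phi"
    and "j \<in> {1..m}"
  shows "\<exists>W. zariski_open_P1 W \<and> W \<noteq> {} \<and> W \<subseteq> goodU m phi j \<and>
           (\<exists>d\<le>m. \<exists>F :: nat \<Rightarrow> nat \<Rightarrow> 'a. \<forall>v\<in>W.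
              {c \<in> hspace m. lin m phi c \<in> Sigma0 m j v}
                = {(\<lambda>k. t * (if k \<le> m then hpoly d (F k) v else 0)) | t. True}
              \<and> (\<lambda>k. if k \<le> m then hpoly d (F k) v else 0) \<noteq> (\<lambda>_. 0))"
proof -
  have phiT: "\<And>k. k \<le> m \<Longrightarrow> phi k \<in> tensors m" and inj: "inj_on (lin m phi) (hspace m)"
    using assms(1) unfolding factorization_structure_def by auto
  obtain W0 where W0: "zariski_open_P1 W0" "W0 \<noteq> {}" "W0 \<subseteq> goodU m phi j"
    using assms unfolding factorization_structure_def by blast
  obtain P0 :: "(nat \<times> (nat \<Rightarrow> 'a)) set" where P0: "W0 = {v. v \<noteq> (0,0) \<and> (\<exists>(d,c)\<in>P0. hpoly d c v \<noteq> 0)}"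
    using W0(1) unfolding zariski_open_P1_def by blast
  obtain v0 where v0: "v0 \<in> W0" using W0(2) by blast
  obtain ss where ss: "set ss = idx m" using finite_list[OF finite_idx] by blast
  define N where "N = length ss"
  define \<alpha> where "\<alpha> r k = phi k ((ss ! r)(j := False))" for r k
  define \<beta> where "\<beta> r k = phi k ((ss ! r)(j := True))" for r k
  have linT: "lin m phi c \<in> tensors m" for c
  proof -
    have "lin m phi c s = 0" if s: "s \<notin> idx m" for s
    proof -
      have "\<And>k. k \<in> {..m} \<Longrightarrow> c k * phi k s = 0" using phiT s unfolding tensors_def by auto
      then show ?thesis unfolding lin_def by (rule sum.neutral[rule_format]) 
    qed
    then show ?thesis unfolding tensors_def by blast
  qed
  have eqr: "fst v * lin m phi c ((ss ! r)(j := False)) + snd v * lin m phi c ((ss ! r)(j := True))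
      = (\<Sum>k\<le>m. Mv \<alpha> \<beta> v r k * c k)" for v c r
    unfolding lin_def Mv_def \<alpha>_def \<beta>_def sum_distrib_left sum.distrib[symmetric]
    by (rule sum.cong) (simp_all add: algebra_simps)
  have K: "{c \<in> hspace m. lin m phi c \<in> Sigma0 m j v} = kerM N m \<alpha> \<beta> v" for v
  proof (rule Set.set_eqI)
    fix c
    have hh: "(\<forall>s\<in>idx m. fst v * lin m phi c (s(j := False)) + snd v * lin m phi c (s(j := True)) = 0)
        = (\<forall>r<N. (\<Sum>k\<le>m. Mv \<alpha> \<beta> v r k * c k) = 0)"
      unfolding ss[symmetric] N_def all_set_conv_all_nth eqr ..
    have "c \<in> {c \<in> hspace m. lin m phi c \<in> Sigma0 m j v} \<longleftrightarrow>
       (\<forall>k. m < k \<longrightarrow> c k = 0) \<and> (\<forall>s\<in>idx m. fst v * lin m phi c (s(j := False)) + snd v * lin m phi c (s(j := True)) = 0)"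
      unfolding hspace_def Sigma0_def using linT[of c] by simp
    also have "\<dots> \<longleftrightarrow> c \<in> kerM N m \<alpha> \<beta> v" unfolding kerM_def hh by simp
    finally show "c \<in> {c \<in> hspace m. lin m phi c \<in> Sigma0 m j v} \<longleftrightarrow> c \<in> kerM N m \<alpha> \<beta> v" .
  qed
  have G1: "\<exists>c. c \<noteq> (\<lambda>_. 0) \<and> kerM N m \<alpha> \<beta> v = {(\<lambda>k. t * c k) | t. True}"
    if v: "v \<in> goodU m phi j" for v
  proof -
    obtain T where T: "T \<noteq> (\<lambda>_. 0)" "image_phi m phi \<inter> Sigma0 m j v = {(\<lambda>s. t * T s) | t. True}"
      using v unfolding goodU_def one_dim_def by blast
    have "T = (\<lambda>s. 1 * T s)" by simp
    then have "T \<in> image_phi m phi \<inter> Sigma0 m j v" using T(2) by blast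
    then obtain c0 where c0: "c0 \<in> hspace m" "T = lin m phi c0" unfolding image_phi_def by blast
    have "c0 \<noteq> (\<lambda>_. 0)"
    proof
      assume "c0 = (\<lambda>_. 0)"
      then have "T = (\<lambda>_. 0)" using c0(2) unfolding lin_def by simp
      then show False using T(1) by simp
    qed
    moreover have "{c \<in> hspace m. lin m phi c \<in> Sigma0 m j v} = {(\<lambda>k. t * c0 k) | t. True}"
    proof
      show "{c \<in> hspace m. lin m phi c \<in> Sigma0 m j v} \<subseteq> {(\<lambda>k. t * c0 k) | t. True}"
      proof
        fix c assume c: "c \<in> {c \<in> hspace m. lin m phi c \<in> Sigma0 m j v}"
        then have "lin m phi c \<in> image_phi m phi \<inter> Sigma0 m j v" unfolding image_phi_def by auto
        then obtain t where t: "lin m phi c = (\<lambda>s. t * T s)" using T(2) by blast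
        have hs: "(\<lambda>k. t * c0 k) \<in> hspace m" using c0(1) unfolding hspace_def by simp
        have "lin m phi c = lin m phi (\<lambda>k. t * c0 k)" by (simp add: lin_scale t c0(2))
        then have "c = (\<lambda>k. t * c0 k)" using inj c hs unfolding inj_on_def by blast
        then show "c \<in> {(\<lambda>k. t * c0 k) | t. True}" by blast
      qed
    next
      show "{(\<lambda>k. t * c0 k) | t. True} \<subseteq> {c \<in> hspace m. lin m phi c \<in> Sigma0 m j v}"
      proof
        fix c assume "c \<in> {(\<lambda>k. t * c0 k) | t. True}"
        then obtain t where t: "c = (\<lambda>k. t * c0 k)" by blast
        have hs: "c \<in> hspace m" using c0(1) t unfolding hspace_def by simp
        have "lin m phi c = (\<lambda>s. t * T s)" by (simp add: lin_scale t c0(2))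
        then have "lin m phi c \<in> Sigma0 m j v" using T(2) by blast
        then show "c \<in> {c \<in> hspace m. lin m phi c \<in> Sigma0 m j v}" using hs by blast
      qed
    qed
    ultimately show ?thesis using K by auto
  qed
  obtain c0 where c0: "c0 \<noteq> (\<lambda>_. 0)" "kerM N m \<alpha> \<beta> v0 = {(\<lambda>k. t * c0 k) | t. True}"
    using G1 v0 W0(3) by blast
  from main_la[OF c0(2) c0(1)] obtain F where F1: "(\<lambda>k. if k \<le> m then hpoly m (F k) v0 else 0) \<noteq> (\<lambda>_. 0)"
    and F2: "\<forall>v. (\<exists>c. c \<noteq> (\<lambda>_. 0) \<and> kerM N m \<alpha> \<beta> v = {(\<lambda>k. t * c k) | t. True}) \<and>
         (\<lambda>k. if k \<le> m then hpoly m (F k) v else 0) \<noteq> (\<lambda>_. 0) \<longrightarrow>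
       kerM N m \<alpha> \<beta> v = {(\<lambda>k. t * (if k \<le> m then hpoly m (F k) v else 0)) | t. True}"
    by (elim exE conjE) (rule that; assumption)
  define PP where "PP = {(d', c'). \<exists>d a k. (d,a) \<in> P0 \<and> k \<le> m \<and> d' = d + m \<and>
        (\<forall>v. hpoly d' c' v = hpoly d a v * hpoly m (F k) v)}"
  define W where "W = {v. v \<noteq> (0,0) \<and> (\<exists>(d,c)\<in>PP. hpoly d c v \<noteq> (0::'a))}"
  have Wchar: "v \<in> W \<longleftrightarrow> v \<in> W0 \<and> (\<exists>k\<le>m. hpoly m (F k) v \<noteq> 0)" for v
  proof
    assume "v \<in> W"
    then obtain d' c' where v: "v \<noteq> (0,0)" "(d',c') \<in> PP" "hpoly d' c' v \<noteq> 0" unfolding W_def by auto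
    then obtain d a k where dak: "(d,a) \<in> P0" "k \<le> m" "\<forall>v. hpoly d' c' v = hpoly d a v * hpoly m (F k) v"
      unfolding PP_def by blast
    have nz: "hpoly d a v \<noteq> 0" "hpoly m (F k) v \<noteq> 0" using v(3) dak(3)[rule_format, of v] by auto
    have "v \<in> W0" unfolding P0 using v(1) dak(1) nz(1) by (auto intro!: bexI[of _ "(d,a)"])
    then show "v \<in> W0 \<and> (\<exists>k\<le>m. hpoly m (F k) v \<noteq> 0)" using dak(2) nz(2) by blast
  next
    assume asm: "v \<in> W0 \<and> (\<exists>k\<le>m. hpoly m (F k) v \<noteq> 0)"
    then obtain k where k: "k \<le> m" "hpoly m (F k) v \<noteq> 0" by blast
    from asm have "v \<in> W0" by blast
    then obtain d a where v: "v \<noteq> (0,0)" "(d,a) \<in> P0" "hpoly d a v \<noteq> 0"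
      unfolding P0 by auto
    have "ishp d (hpoly d a)" "ishp m (hpoly m (F k))" unfolding ishp_def by blast+
    from ishp_mult[OF this] obtain c' where c': "\<And>v. hpoly d a v * hpoly m (F k) v = hpoly (d + m) c' v"
      unfolding ishp_def by blast
    have "\<exists>d0 a0 k0. (d0,a0) \<in> P0 \<and> k0 \<le> m \<and> d + m = d0 + m \<and>
        (\<forall>v. hpoly (d + m) c' v = hpoly d0 a0 v * hpoly m (F k0) v)"
      by (intro exI[of _ d] exI[of _ a] exI[of _ k] conjI v(2) k(1) refl allI) (simp add: c')
    then have "(d + m, c') \<in> PP" unfolding PP_def by simp
    moreover have "hpoly (d + m) c' v \<noteq> 0" by (metis c' mult_eq_0_iff v(3) k(2))
    ultimately show "v \<in> W" unfolding W_def using v(1) by blast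
  qed
  have Wz: "zariski_open_P1 W" unfolding zariski_open_P1_def by (rule exI[of _ PP]) (simp add: W_def)
  have "\<exists>k\<le>m. hpoly m (F k) v0 \<noteq> 0" using F1 by (auto simp: fun_eq_iff split: if_splits)
  then have "v0 \<in> W" using Wchar v0 by blast
  then have Wne: "W \<noteq> {}" by blast
  have Wsub: "W \<subseteq> goodU m phi j" using Wchar W0(3) by blast
  have main: "\<forall>v\<in>W. {c \<in> hspace m. lin m phi c \<in> Sigma0 m j v}
                = {(\<lambda>k. t * (if k \<le> m then hpoly m (F k) v else 0)) | t. True}
              \<and> (\<lambda>k. if k \<le> m then hpoly m (F k) v else 0) \<noteq> (\<lambda>_. 0)"
  proof
    fix v assume v: "v \<in> W"
    then obtain k where k: "k \<le> m" "hpoly m (F k) v \<noteq> 0" using Wchar by blast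
    have nz: "(\<lambda>k. if k \<le> m then hpoly m (F k) v else 0) \<noteq> (\<lambda>_. 0)"
    proof
      assume "(\<lambda>k. if k \<le> m then hpoly m (F k) v else 0) = (\<lambda>_. 0)"
      then have "(if k \<le> m then hpoly m (F k) v else 0) = 0" by (rule fun_cong)
      then show False using k by simp
    qed
    have "v \<in> goodU m phi j" using Wsub v by blast
    from G1[OF this] nz have "(\<exists>c. c \<noteq> (\<lambda>_. 0) \<and> kerM N m \<alpha> \<beta> v = {(\<lambda>k. t * c k) | t. True}) \<and>
         (\<lambda>k. if k \<le> m then hpoly m (F k) v else 0) \<noteq> (\<lambda>_. 0)" by (rule conjI)
    from F2[rule_format, OF this] have "kerM N m \<alpha> \<beta> v = {(\<lambda>k. t * (if k \<le> m then hpoly m (F k) v else 0)) | t. True}" .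
    then show "{c \<in> hspace m. lin m phi c \<in> Sigma0 m j v}
                = {(\<lambda>k. t * (if k \<le> m then hpoly m (F k) v else 0)) | t. True}
              \<and> (\<lambda>k. if k \<le> m then hpoly m (F k) v else 0) \<noteq> (\<lambda>_. 0)"
      using K nz by simp
  qed
  show ?thesis by (intro exI[of _ W] conjI Wz Wne Wsub exI[of _ m] le_refl exI[of _ F] main)
qed

end
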